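(* Let $(M,g)$ be a Hessian manifold. Then all Pontryagin forms of $(M,g)$ vanish identically.
   Context: A Riemannian metric $g$ on $M$ is Hessian if around each point there are local coordinates $x_1,\dots,x_n$ and a function $\phi$ with $g_{ij} = \partial^2\phi/\partial x_i\partial x_j$. For a connection on a complex vector bundle with curvature matrix of $2$-forms $\Omega$ (in a local frame) and an invariant polynomial $P$, $P(\Omega)$ is a well-defined closed form. Let $P_k$ be the invariant polynomial given by the coefficient of $t^k$ in $\det(I+tX)$. The Pontryagin forms of $(M,g)$ are the forms $P_{2k}(\Omega)$, $k\ge 1$, where $\Omega$ is the curvature of the Levi-Civita connection extended to the complexified tangent bundle $TM\otimes\mathbb{C}$; they are the closed forms, polynomial in the curvature, representing (up to constant factors) the Pontryagin classes $p_k(M) = (-1)^k c_{2k}(TM\otimes\mathbb{C})$. *)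

theory Defs
  imports "HOL-Analysis.Analysis"
begin

text \<open>Local-coordinate differential geometry on an open set U of real^'n.
  Coordinates are indexed by the finite type 'n; the coordinate vector fields
  are the standard basis vectors (axis i 1).\<close>

definition pd :: "'n::finite \<Rightarrow> (real^'n \<Rightarrow> real) \<Rightarrow> real^'n \<Rightarrow> real" where
  "pd i f x = deriv (\<lambda>t. f (x + t *\<^sub>R axis i 1)) 0"

fun pds :: "'n::finite list \<Rightarrow> (real^'n \<Rightarrow> real) \<Rightarrow> real^'n \<Rightarrow> real" where
  "pds [] f = f"
| "pds (i # is) f = pd i (pds is f)"

definition smooth_on :: "(real^'n::finite) set \<Rightarrow> (real^'n \<Rightarrow> real) \<Rightarrow> bool" where
  "smooth_on U f \<longleftrightarrow> (\<forall>is. pds is f differentiable_on U)"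

definition hessian :: "(real^'n::finite \<Rightarrow> real) \<Rightarrow> 'n \<Rightarrow> 'n \<Rightarrow> real^'n \<Rightarrow> real" where
  "hessian \<phi> i j = pd i (pd j \<phi>)"

definition pos_def_metric_on ::
    "(real^'n::finite) set \<Rightarrow> ('n \<Rightarrow> 'n \<Rightarrow> real^'n \<Rightarrow> real) \<Rightarrow> bool" where
  "pos_def_metric_on U g \<longleftrightarrow>
     (\<forall>x\<in>U. (\<forall>i j. g i j x = g j i x) \<and>
        (\<forall>v::real^'n. v \<noteq> 0 \<longrightarrow> (\<Sum>i\<in>UNIV. \<Sum>j\<in>UNIV. g i j x * v$i * v$j) > 0))"

definition metric_inv :: "('n::finite \<Rightarrow> 'n \<Rightarrow> real^'n \<Rightarrow> real) \<Rightarrow> real^'n \<Rightarrow> 'n \<Rightarrow> 'n \<Rightarrow> real" where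
  "metric_inv g x k l = matrix_inv (\<chi> i j. g i j x) $ k $ l"

text \<open>Christoffel symbols Gamma^k_{ij} of the Levi-Civita connection,
  nabla_{d_i} d_j = sum_k Gamma^k_{ij} d_k.\<close>
definition christoffel :: "('n::finite \<Rightarrow> 'n \<Rightarrow> real^'n \<Rightarrow> real) \<Rightarrow> 'n \<Rightarrow> 'n \<Rightarrow> 'n \<Rightarrow> real^'n \<Rightarrow> real" where
  "christoffel g k i j x =
     (1/2) * (\<Sum>l\<in>UNIV. metric_inv g x k l *
                 (pd i (g j l) x + pd j (g i l) x - pd l (g i j) x))"

text \<open>Components R^i_{jkl} of the curvature in the coordinate frame: with the
  connection matrix omega^i_j = sum_k Gamma^i_{kj} dx^k, the curvature matrix
  Omega = d omega + omega wedge omega satisfies Omega^i_j(d_k, d_l) = R^i_{jkl}.\<close>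
definition curv :: "('n::finite \<Rightarrow> 'n \<Rightarrow> real^'n \<Rightarrow> real) \<Rightarrow> 'n \<Rightarrow> 'n \<Rightarrow> 'n \<Rightarrow> 'n \<Rightarrow> real^'n \<Rightarrow> real" where
  "curv g i j k l x =
     pd k (christoffel g i l j) x - pd l (christoffel g i k j) x
     + (\<Sum>m\<in>UNIV. christoffel g i k m x * christoffel g m l j x
                 - christoffel g i l m x * christoffel g m k j x)"

definition curv_form :: "('n::finite \<Rightarrow> 'n \<Rightarrow> real^'n \<Rightarrow> real) \<Rightarrow> real^'n \<Rightarrow> 'n \<Rightarrow> 'n \<Rightarrow> real^'n \<Rightarrow> real^'n \<Rightarrow> real" where
  "curv_form g x i j u w = (\<Sum>k\<in>UNIV. \<Sum>l\<in>UNIV. curv g i j k l x * u$k * w$l)"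

definition wedge2 :: "(real^'n::finite \<Rightarrow> real^'n \<Rightarrow> real) list \<Rightarrow> (nat \<Rightarrow> real^'n) \<Rightarrow> real" where
  "wedge2 bs v =
     (1 / 2 ^ length bs) *
     (\<Sum>\<sigma>\<in>{\<sigma>. \<sigma> permutes {..<2 * length bs}}.
        of_int (sign \<sigma>) * (\<Prod>a<length bs. (bs ! a) (v (\<sigma> (2*a))) (v (\<sigma> (2*a+1)))))"

text \<open>P_k(Omega): coefficient of t^k in det(I + t Omega), i.e. the sum of the
  principal k-minors of Omega, computed in the commutative algebra of even forms.
  The principal minor on an index set I is
  sum_{pi permutes I} sgn pi wedge_{i in I} Omega^i_{pi i}; we sum over all
  k! enumerations of I (distinct lists) and divide by k!.\<close>
definition inv_poly_P :: "nat \<Rightarrow> ('n::finite \<Rightarrow> 'n \<Rightarrow> real^'n \<Rightarrow> real^'n \<Rightarrow> real) \<Rightarrow> (nat \<Rightarrow> real^'n) \<Rightarrow> real" where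
  "inv_poly_P k \<Omega> v =
     (1 / fact k) *
     (\<Sum>is\<in>{is::'n list. distinct is \<and> length is = k}.
        \<Sum>\<pi>\<in>{\<pi>. \<pi> permutes set is}.
          of_int (sign \<pi>) * wedge2 (map (\<lambda>i. \<Omega> i (\<pi> i)) is) v)"

definition pontryagin_form :: "('n::finite \<Rightarrow> 'n \<Rightarrow> real^'n \<Rightarrow> real) \<Rightarrow> nat \<Rightarrow> real^'n \<Rightarrow> (nat \<Rightarrow> real^'n) \<Rightarrow> real" where
  "pontryagin_form g k x v = inv_poly_P (2 * k) (curv_form g x) v"

end

theory Submission
  imports Defs "HOL-Combinatorics.Cycles"
begin

lemma sign_cycle_of_list:
  "distinct cs \<Longrightarrow> cs \<noteq> [] \<Longrightarrow> sign (cycle_of_list cs) = (-1) ^ (length cs - 1)"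
proof (induction cs rule: cycle_of_list.induct)
  case (1 i j cs)
  have "sign (cycle_of_list (i # j # cs)) = sign (Transposition.transpose i j) * sign (cycle_of_list (j # cs))"
    by (simp add: sign_compose permutation_swap_id permutation_of_cycle)
  also have "\<dots> = - ((-1) ^ (length (j#cs) - 1))"
    using 1 by (simp add: sign_swap_id)
  finally have eq: "sign (cycle_of_list (i # j # cs)) = - ((-1) ^ (length (j#cs) - 1))" .
  show ?case by (subst eq) simp
next
  case ("2_1")
  then show ?case by simp
next
  case ("2_2" v)
  then show ?case by simp
qed

definition SS :: "(nat \<Rightarrow> 'n \<Rightarrow> 'n \<Rightarrow> real) \<Rightarrow> nat \<Rightarrow> (nat \<Rightarrow> nat) \<Rightarrow> (nat \<Rightarrow> nat) \<Rightarrow> real" where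
  "SS X N \<sigma> \<rho> = (\<Sum>j\<in>{..<N} \<rightarrow>\<^sub>E (UNIV::'n set). \<Prod>s<N. X (\<sigma> s) (j s) (j (\<rho> s)))"

lemma SS_conj:
  fixes X :: "nat \<Rightarrow> 'n \<Rightarrow> 'n \<Rightarrow> real"
  assumes c: "c permutes {..<N}" and r: "\<rho> permutes {..<N}" and comm: "c \<circ> \<rho> = \<rho> \<circ> c"
  shows "SS X N (\<sigma> \<circ> c) \<rho> = SS X N \<sigma> \<rho>"
proof -
  let ?A = "{..<N} \<rightarrow>\<^sub>E (UNIV::'n set)"
  define ci where "ci = inv c"
  have ci: "ci permutes {..<N}" using c permutes_inv ci_def by blast
  have cci: "c (ci x) = x" "ci (c x) = x" for x
    using c ci_def permutes_inverses by fastforce+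
  have comm2: "\<rho> (ci t) = ci (\<rho> t)" for t
  proof -
    have "c (\<rho> (ci t)) = \<rho> t" using comm cci by (metis comp_apply)
    then show ?thesis by (metis cci(2))
  qed
  have cN: "c x < N \<longleftrightarrow> x < N" "ci x < N \<longleftrightarrow> x < N" for x
    using permutes_in_image[OF c, of x] permutes_in_image[OF ci, of x] by auto
  define T where "T j = restrict (j \<circ> ci) {..<N}" for j :: "nat \<Rightarrow> 'n"
  have bij: "bij_betw T ?A ?A"
  proof (rule bij_betw_byWitness[where f' = "\<lambda>j. restrict (j \<circ> c) {..<N}"])
    show "\<forall>a\<in>?A. restrict (T a \<circ> c) {..<N} = a"
      using cN cci by (auto simp: T_def fun_eq_iff PiE_def extensional_def)
    show "\<forall>a'\<in>?A. T (restrict (a' \<circ> c) {..<N}) = a'"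
      using cN cci by (auto simp: T_def fun_eq_iff PiE_def extensional_def)
    show "T ` ?A \<subseteq> ?A" by (auto simp: T_def)
    show "(\<lambda>j. restrict (j \<circ> c) {..<N}) ` ?A \<subseteq> ?A" by auto
  qed
  have "SS X N (\<sigma> \<circ> c) \<rho> = (\<Sum>j\<in>?A. \<Prod>s<N. X (\<sigma> (c s)) (j s) (j (\<rho> s)))"
    by (simp add: SS_def)
  also have "\<dots> = (\<Sum>j\<in>?A. \<Prod>t<N. X (\<sigma> t) (T j t) (T j (\<rho> t)))"
  proof (rule sum.cong[OF refl])
    fix j assume j: "j \<in> ?A"
    have "(\<Prod>s<N. X (\<sigma> (c s)) (j s) (j (\<rho> s))) = (\<Prod>t<N. X (\<sigma> (c (ci t))) (j (ci t)) (j (\<rho> (ci t))))"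
      by (rule prod.reindex_bij_betw[symmetric]) (use ci permutes_imp_bij in blast)
    also have "\<dots> = (\<Prod>t<N. X (\<sigma> t) (T j t) (T j (\<rho> t)))"
      using permutes_in_image[OF r] by (intro prod.cong refl) (auto simp: T_def cci comm2)
    finally show "(\<Prod>s<N. X (\<sigma> (c s)) (j s) (j (\<rho> s))) = (\<Prod>t<N. X (\<sigma> t) (T j t) (T j (\<rho> t)))" .
  qed
  also have "\<dots> = SS X N \<sigma> \<rho>"
    unfolding SS_def by (rule sum.reindex_bij_betw[OF bij])
  finally show ?thesis .
qed

lemma H_zero:
  fixes X :: "nat \<Rightarrow> 'n \<Rightarrow> 'n \<Rightarrow> real"
  assumes c: "c permutes {..<N}" and r: "\<rho> permutes {..<N}" and comm: "c \<circ> \<rho> = \<rho> \<circ> c"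
    and sc: "sign c = -1"
  shows "(\<Sum>\<sigma>\<in>{\<sigma>. \<sigma> permutes {..<N}}. of_int (sign \<sigma>) * SS X N \<sigma> \<rho>) = 0"
proof -
  let ?P = "{\<sigma>. \<sigma> permutes {..<N}}"
  have "(\<Sum>\<sigma>\<in>?P. of_int (sign \<sigma>) * SS X N \<sigma> \<rho>) = (\<Sum>\<sigma>\<in>?P. of_int (sign (\<sigma> \<circ> c)) * SS X N (\<sigma> \<circ> c) \<rho>)"
    by (rule sum_permutations_compose_right[OF c])
  also have "\<dots> = (\<Sum>\<sigma>\<in>?P. - (of_int (sign \<sigma>) * SS X N \<sigma> \<rho>))"
  proof (rule sum.cong[OF refl])
    fix \<sigma> assume "\<sigma> \<in> ?P"
    then have "permutation \<sigma>" using permutation_permutes by blast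
    moreover have "permutation c" using c permutation_permutes by blast
    ultimately show "of_int (sign (\<sigma> \<circ> c)) * SS X N (\<sigma> \<circ> c) \<rho> = - (of_int (sign \<sigma>) * SS X N \<sigma> \<rho>)"
      using SS_conj[OF c r comm] sc by (simp add: sign_compose)
  qed
  finally show ?thesis by (simp add: sum_negf)
qed

lemma odd_commuting:
  fixes \<rho> :: "nat \<Rightarrow> nat"
  assumes r: "\<rho> permutes {..<N}" and alt: "\<forall>s<N. odd (\<rho> s + s)" and N: "0 < N"
  shows "\<exists>c. c permutes {..<N} \<and> c \<circ> \<rho> = \<rho> \<circ> c \<and> sign c = -1"
proof -
  have perm: "permutation \<rho>" using r permutation_permutes by blast
  have rN: "\<rho> x < N \<longleftrightarrow> x < N" for x using permutes_in_image[OF r, of x] by auto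
  have pw: "(\<rho> ^^ n) 0 < N \<and> even ((\<rho> ^^ n) 0 + n)" for n
  proof (induction n)
    case 0 then show ?case using N by simp
  next
    case (Suc n)
    then have a: "(\<rho> ^^ n) 0 < N" and b: "even ((\<rho> ^^ n) 0 + n)" by auto
    have "odd (\<rho> ((\<rho> ^^ n) 0) + (\<rho> ^^ n) 0)" using alt a by auto
    with a b rN show ?case by auto
  qed
  define L where "L = least_power \<rho> 0"
  have L: "(\<rho> ^^ L) 0 = 0" "L > 0" using least_power_of_permutation[OF perm] L_def by auto
  have evL: "even L" using pw[of L] L by simp
  have L2: "L \<ge> 2" using evL L(2) by presburger
  define cs where "cs = support \<rho> 0"
  have dcs: "distinct cs" using cycle_of_permutation[OF perm] cs_def by simp
  have lcs: "length cs = L" using cs_def L_def by simp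
  have setcs: "set cs = range (\<lambda>i. (\<rho> ^^ i) 0)" using support_set[OF perm] cs_def by simp
  define c where "c = cycle_of_list cs"
  have sc: "sign c = -1"
  proof -
    have "cs \<noteq> []" using lcs L2 by auto
    then have "sign c = (-1) ^ (L - 1)" using sign_cycle_of_list[OF dcs] lcs c_def by simp
    moreover have "odd (L - 1)" using evL L2 by simp
    ultimately show ?thesis by simp
  qed
  have csN: "set cs \<subseteq> {..<N}" using setcs pw by auto
  have cp: "c permutes {..<N}"
    using permutes_subset[OF cycle_permutes csN] c_def by simp
  have comm: "c (\<rho> x) = \<rho> (c x)" for x
  proof (cases "x \<in> set cs")
    case True
    then obtain i where i: "x = (\<rho> ^^ i) 0" using setcs by auto
    have rx: "\<rho> x \<in> set cs" using setcs i by (auto intro!: range_eqI[of _ _ "Suc i"])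
    have "c x = \<rho> x" using cycle_restrict[OF perm, of x 0] True c_def cs_def by simp
    moreover have "c (\<rho> x) = \<rho> (\<rho> x)" using cycle_restrict[OF perm, of "\<rho> x" 0] rx c_def cs_def by simp
    ultimately show ?thesis by simp
  next
    case False
    have nrx: "\<rho> x \<notin> set cs"
    proof
      assume "\<rho> x \<in> set cs"
      then obtain i where i: "\<rho> x = (\<rho> ^^ i) 0" using setcs by auto
      have "\<rho> ((\<rho> ^^ (i + L - 1)) 0) = (\<rho> ^^ (i + L)) 0"
      proof -
        have "i + L = Suc (i + L - 1)" using L by simp
        then show ?thesis by (metis comp_apply funpow.simps(2))
      qed
      also have "\<dots> = (\<rho> ^^ i) ((\<rho> ^^ L) 0)" by (simp add: funpow_add)
      also have "\<dots> = \<rho> x" using L i by simp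
      finally have "x = (\<rho> ^^ (i + L - 1)) 0"
        using permutes_inj[OF r] by (metis injD)
      then show False using False setcs by auto
    qed
    have "c x = x" using id_outside_supp[OF False] c_def by simp
    moreover have "c (\<rho> x) = \<rho> x" using id_outside_supp[OF nrx] c_def by simp
    ultimately show ?thesis by simp
  qed
  show ?thesis using cp sc comm by (intro exI[of _ c]) (auto simp: fun_eq_iff)
qed

definition rho_of :: "nat \<Rightarrow> (nat \<Rightarrow> nat) \<Rightarrow> nat \<Rightarrow> nat" where
  "rho_of p \<tau> s = (if s < 2*p then (if even s then s+1 else 2 * \<tau> (s div 2)) else s)"

lemma rho_of_perm:
  assumes t: "\<tau> permutes {..<p}"
  shows "rho_of p \<tau> permutes {..<2*p}" "\<forall>s<2*p. odd (rho_of p \<tau> s + s)"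
proof -
  have tp: "\<tau> a < p \<longleftrightarrow> a < p" for a using permutes_in_image[OF t, of a] by auto
  have ti: "\<tau> a = \<tau> b \<Longrightarrow> a = b" for a b using permutes_inj[OF t] by (meson injD)
  have into: "rho_of p \<tau> s < 2*p" if "s < 2*p" for s
    using that tp[of "s div 2"] by (auto simp: rho_of_def)
  have inj: "inj_on (rho_of p \<tau>) {..<2*p}"
  proof (rule inj_onI)
    fix s s' assume s: "s \<in> {..<2*p}" and s': "s' \<in> {..<2*p}" and e: "rho_of p \<tau> s = rho_of p \<tau> s'"
    show "s = s'"
    proof (cases "even s")
      case True
      then show ?thesis using s s' e by (auto simp: rho_of_def split: if_splits) presburger
    next
      case False
      then have o': "odd s'" using s s' e by (auto simp: rho_of_def split: if_splits) presburger
      then have "\<tau> (s div 2) = \<tau> (s' div 2)" using False s s' e by (auto simp: rho_of_def)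
      then have "s div 2 = s' div 2" by (rule ti)
      then show ?thesis using False o' by presburger
    qed
  qed
  have img: "rho_of p \<tau> ` {..<2*p} = {..<2*p}"
    by (rule endo_inj_surj) (use inj into in auto)
  show "rho_of p \<tau> permutes {..<2*p}"
  proof (rule bij_imp_permutes)
    show "bij_betw (rho_of p \<tau>) {..<2*p} {..<2*p}" using inj img by (simp add: bij_betw_def)
  qed (simp add: rho_of_def)
  show "\<forall>s<2*p. odd (rho_of p \<tau> s + s)" by (auto simp: rho_of_def)
qed

lemma prod_pairs: "(\<Prod>s<2*(p::nat). f s) = (\<Prod>a<p. f (2*a) * f (2*a+1))"
proof (induction p)
  case 0 then show ?case by simp
next
  case (Suc p)
  have "{..<2 * Suc p} = insert (Suc (2*p)) (insert (2*p) {..<2*p})" by auto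
  then have "(\<Prod>s<2*Suc p. f s) = f (Suc (2*p)) * (f (2*p) * (\<Prod>s<2*p. f s))" by simp
  then show ?case using Suc by (simp add: ac_simps)
qed

lemma sum_to_SS:
  fixes X :: "nat \<Rightarrow> 'n::finite \<Rightarrow> 'n \<Rightarrow> real"
  assumes t: "\<tau> permutes {..<p}"
  shows "(\<Sum>i\<in>{..<p} \<rightarrow>\<^sub>E (UNIV::'n set). \<Prod>a<p. (\<Sum>b\<in>UNIV. X (\<sigma> (2*a)) (i a) b * X (\<sigma> (2*a+1)) b (i (\<tau> a))))
     = SS X (2*p) \<sigma> (rho_of p \<tau>)"
proof -
  let ?A = "{..<p} \<rightarrow>\<^sub>E (UNIV::'n set)"
  let ?B = "{..<2*p} \<rightarrow>\<^sub>E (UNIV::'n set)"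
  have tp: "\<tau> a < p" if "a < p" for a using permutes_in_image[OF t, of a] that by auto
  define J where "J = (\<lambda>(i::nat\<Rightarrow>'n, b::nat\<Rightarrow>'n). \<lambda>s. if s < 2*p then (if even s then i (s div 2) else b (s div 2)) else undefined)"
  have bij: "bij_betw J (?A \<times> ?A) ?B"
  proof (rule bij_betw_byWitness[where f' = "\<lambda>j. (restrict (\<lambda>a. j (2*a)) {..<p}, restrict (\<lambda>a. j (2*a+1)) {..<p})"])
    show "\<forall>a\<in>?A \<times> ?A. (\<lambda>j. (restrict (\<lambda>a. j (2*a)) {..<p}, restrict (\<lambda>a. j (2*a+1)) {..<p})) (J a) = a"
      by (auto simp: J_def fun_eq_iff PiE_def extensional_def)
    show "\<forall>a'\<in>?B. J ((\<lambda>j. (restrict (\<lambda>a. j (2*a)) {..<p}, restrict (\<lambda>a. j (2*a+1)) {..<p})) a') = a'"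
    proof
      fix j assume j: "j \<in> ?B"
      show "J ((\<lambda>j. (restrict (\<lambda>a. j (2*a)) {..<p}, restrict (\<lambda>a. j (2*a+1)) {..<p})) j) = j"
      proof
        fix s
        show "J ((\<lambda>j. (restrict (\<lambda>a. j (2*a)) {..<p}, restrict (\<lambda>a. j (2*a+1)) {..<p})) j) s = j s"
        proof (cases "s < 2*p")
          case True
          have d: "s div 2 < p" using True by simp
          show ?thesis
          proof (cases "even s")
            case True
            then have "2 * (s div 2) = s" by simp
            then show ?thesis using d \<open>s < 2*p\<close> True by (simp add: J_def)
          next
            case False
            then have "2 * (s div 2) + 1 = s" by presburger
            then show ?thesis using d \<open>s < 2*p\<close> False by (simp add: J_def)
          qed
        next
          case False
          then show ?thesis using j by (auto simp: J_def PiE_def extensional_def)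
        qed
      qed
    qed
    show "J ` (?A \<times> ?A) \<subseteq> ?B" by (auto simp: J_def)
    show "(\<lambda>j. (restrict (\<lambda>a. j (2*a)) {..<p}, restrict (\<lambda>a. j (2*a+1)) {..<p})) ` ?B \<subseteq> ?A \<times> ?A"
      by auto
  qed
  have "(\<Sum>i\<in>?A. \<Prod>a<p. (\<Sum>b\<in>UNIV. X (\<sigma> (2*a)) (i a) b * X (\<sigma> (2*a+1)) b (i (\<tau> a))))
     = (\<Sum>i\<in>?A. \<Sum>b\<in>?A. \<Prod>a<p. X (\<sigma> (2*a)) (i a) (b a) * X (\<sigma> (2*a+1)) (b a) (i (\<tau> a)))"
    by (intro sum.cong refl prod_sum_PiE) auto
  also have "\<dots> = (\<Sum>(i,b)\<in>?A \<times> ?A. \<Prod>a<p. X (\<sigma> (2*a)) (i a) (b a) * X (\<sigma> (2*a+1)) (b a) (i (\<tau> a)))"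
    by (rule sum.cartesian_product)
  also have "\<dots> = (\<Sum>ib\<in>?A \<times> ?A. \<Prod>s<2*p. X (\<sigma> s) (J ib s) (J ib (rho_of p \<tau> s)))"
  proof (rule sum.cong[OF refl])
    fix ib assume "ib \<in> ?A \<times> ?A"
    obtain i b where ib: "ib = (i, b)" by fastforce
    have "(\<Prod>s<2*p. X (\<sigma> s) (J ib s) (J ib (rho_of p \<tau> s))) =
      (\<Prod>a<p. X (\<sigma> (2*a)) (J ib (2*a)) (J ib (rho_of p \<tau> (2*a))) * X (\<sigma> (2*a+1)) (J ib (2*a+1)) (J ib (rho_of p \<tau> (2*a+1))))"
      by (rule prod_pairs)
    also have "\<dots> = (\<Prod>a<p. X (\<sigma> (2*a)) (i a) (b a) * X (\<sigma> (2*a+1)) (b a) (i (\<tau> a)))"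
      using tp by (intro prod.cong refl) (auto simp: J_def ib rho_of_def)
    finally show "(case ib of (i, b) \<Rightarrow> \<Prod>a<p. X (\<sigma> (2*a)) (i a) (b a) * X (\<sigma> (2*a+1)) (b a) (i (\<tau> a))) =
        (\<Prod>s<2*p. X (\<sigma> s) (J ib s) (J ib (rho_of p \<tau> s)))" using ib by simp
  qed
  also have "\<dots> = SS X (2*p) \<sigma> (rho_of p \<tau>)"
    unfolding SS_def by (rule sum.reindex_bij_betw[OF bij])
  finally show ?thesis .
qed

lemma noninj_zero:
  fixes M :: "nat \<Rightarrow> 'n \<Rightarrow> 'n \<Rightarrow> real"
  assumes ab: "a < p" "b < p" "a \<noteq> b" "i a = i b"
  shows "(\<Sum>\<tau>\<in>{\<tau>. \<tau> permutes {..<p}}. of_int (sign \<tau>) * (\<Prod>c<p. M c (i c) (i (\<tau> c)))) = 0"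
proof -
  let ?P = "{\<tau>. \<tau> permutes {..<p}}"
  let ?t = "Transposition.transpose a b"
  have t: "?t permutes {..<p}" using ab by (intro permutes_swap_id) auto
  have it: "i (?t x) = i x" for x using ab by (auto simp: Transposition.transpose_def)
  have "(\<Sum>\<tau>\<in>?P. of_int (sign \<tau>) * (\<Prod>c<p. M c (i c) (i (\<tau> c))))
      = (\<Sum>\<tau>\<in>?P. of_int (sign (?t \<circ> \<tau>)) * (\<Prod>c<p. M c (i c) (i ((?t \<circ> \<tau>) c))))"
    by (rule setum_permutations_compose_left[OF t])
  also have "\<dots> = (\<Sum>\<tau>\<in>?P. - (of_int (sign \<tau>) * (\<Prod>c<p. M c (i c) (i (\<tau> c)))))"
  proof (rule sum.cong[OF refl])
    fix \<tau> assume "\<tau> \<in> ?P"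
    then have "permutation \<tau>" using permutation_permutes by blast
    then have "sign (?t \<circ> \<tau>) = - sign \<tau>"
      using ab by (simp add: sign_compose permutation_swap_id sign_swap_id)
    then show "of_int (sign (?t \<circ> \<tau>)) * (\<Prod>c<p. M c (i c) (i ((?t \<circ> \<tau>) c))) =
        - (of_int (sign \<tau>) * (\<Prod>c<p. M c (i c) (i (\<tau> c))))" by (simp add: it)
  qed
  finally show ?thesis by (simp add: sum_negf)
qed

lemma inj_case:
  fixes M :: "nat \<Rightarrow> 'n \<Rightarrow> 'n \<Rightarrow> real"
  assumes inj: "inj_on i {..<p}"
  shows "(\<Sum>\<pi>\<in>{\<pi>. \<pi> permutes set (map i [0..<p])}. of_int (sign \<pi>) * (\<Prod>a<p. M a (map i [0..<p] ! a) (\<pi> (map i [0..<p] ! a))))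
    = (\<Sum>\<tau>\<in>{\<tau>. \<tau> permutes {..<p}}. of_int (sign \<tau>) * (\<Prod>a<p. M a (i a) (i (\<tau> a))))"
proof -
  have setis: "set (map i [0..<p]) = i ` {..<p}" by auto
  have bi: "bij_betw i {..<p} (i ` {..<p})" using inj by (simp add: bij_betw_def)
  have mp: "map_permutation {..<p} i \<tau> = (\<lambda>x. if x \<in> i ` {..<p} then i (\<tau> (inv_into {..<p} i x)) else x)" for \<tau>
    by (simp add: map_permutation_def restrict_id_def fun_eq_iff)
  have bij: "bij_betw (map_permutation {..<p} i) {\<tau>. \<tau> permutes {..<p}} {\<pi>. \<pi> permutes i ` {..<p}}"
    unfolding mp using bij_betw_permutations[OF bi] by simp
  have "(\<Sum>\<pi>\<in>{\<pi>. \<pi> permutes set (map i [0..<p])}. of_int (sign \<pi>) * (\<Prod>a<p. M a (map i [0..<p] ! a) (\<pi> (map i [0..<p] ! a))))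
     = (\<Sum>\<pi>\<in>{\<pi>. \<pi> permutes i ` {..<p}}. of_int (sign \<pi>) * (\<Prod>a<p. M a (i a) (\<pi> (i a))))"
    unfolding setis by (intro sum.cong refl prod.cong) auto
  also have "\<dots> = (\<Sum>\<tau>\<in>{\<tau>. \<tau> permutes {..<p}}. of_int (sign (map_permutation {..<p} i \<tau>)) *
        (\<Prod>a<p. M a (i a) (map_permutation {..<p} i \<tau> (i a))))"
    by (rule sum.reindex_bij_betw[OF bij, symmetric])
  also have "\<dots> = (\<Sum>\<tau>\<in>{\<tau>. \<tau> permutes {..<p}}. of_int (sign \<tau>) * (\<Prod>a<p. M a (i a) (i (\<tau> a))))"
  proof (rule sum.cong[OF refl])
    fix \<tau> assume t: "\<tau> \<in> {\<tau>. \<tau> permutes {..<p}}"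
    have "sign (map_permutation {..<p} i \<tau>) = sign \<tau>"
      using t inj by (intro sign_map_permutation) auto
    moreover have "map_permutation {..<p} i \<tau> (i a) = i (\<tau> a)" if "a < p" for a
      using that inj by (simp add: mp)
    ultimately show "of_int (sign (map_permutation {..<p} i \<tau>)) * (\<Prod>a<p. M a (i a) (map_permutation {..<p} i \<tau> (i a)))
       = of_int (sign \<tau>) * (\<Prod>a<p. M a (i a) (i (\<tau> a)))" by simp
  qed
  finally show ?thesis .
qed

lemma claimA:
  fixes M :: "nat \<Rightarrow> 'n::finite \<Rightarrow> 'n \<Rightarrow> real"
  shows "(\<Sum>xs\<in>{xs::'n list. distinct xs \<and> length xs = p}. \<Sum>\<pi>\<in>{\<pi>. \<pi> permutes set xs}.
            of_int (sign \<pi>) * (\<Prod>a<p. M a (xs!a) (\<pi> (xs!a))))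
       = (\<Sum>i\<in>{..<p} \<rightarrow>\<^sub>E (UNIV::'n set). \<Sum>\<tau>\<in>{\<tau>. \<tau> permutes {..<p}}.
            of_int (sign \<tau>) * (\<Prod>a<p. M a (i a) (i (\<tau> a))))"
proof -
  let ?A = "{..<p} \<rightarrow>\<^sub>E (UNIV::'n set)"
  let ?I1 = "{i\<in>?A. inj_on i {..<p}}"
  let ?I2 = "{i\<in>?A. \<not> inj_on i {..<p}}"
  let ?D = "{xs::'n list. distinct xs \<and> length xs = p}"
  define F where "F i = (\<Sum>\<tau>\<in>{\<tau>. \<tau> permutes {..<p}}. of_int (sign \<tau>) * (\<Prod>a<p. M a (i a) (i (\<tau> a))))" for i
  define G where "G xs = (\<Sum>\<pi>\<in>{\<pi>. \<pi> permutes set xs}. of_int (sign \<pi>) * (\<Prod>a<p. M a (xs!a) (\<pi> (xs!a))))" for xs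
  have z: "F i = 0" if "i \<in> ?I2" for i
  proof -
    from that obtain a b where "a < p" "b < p" "a \<noteq> b" "i a = i b"
      by (auto simp: inj_on_def)
    then show ?thesis unfolding F_def by (rule noninj_zero)
  qed
  have "(\<Sum>i\<in>?A. F i) = (\<Sum>i\<in>?I1. F i) + (\<Sum>i\<in>?I2. F i)"
  proof -
    have e: "?A = ?I1 \<union> ?I2" by auto
    have fA: "finite ?A" by (rule finite_PiE) auto
    have f1: "finite ?I1" by (rule finite_subset[OF _ fA]) auto
    have f2: "finite ?I2" by (rule finite_subset[OF _ fA]) auto
    show ?thesis by (subst e, rule sum.union_disjoint[OF f1 f2]) auto
  qed
  also have "(\<Sum>i\<in>?I2. F i) = 0" using z by simp
  finally have s1: "(\<Sum>i\<in>?A. F i) = (\<Sum>i\<in>?I1. F i)" by simp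
  have bij: "bij_betw (\<lambda>i. map i [0..<p]) ?I1 ?D"
  proof (rule bij_betw_byWitness[where f' = "\<lambda>xs. restrict (\<lambda>a. xs ! a) {..<p}"])
    show "\<forall>a\<in>?I1. restrict (\<lambda>k. map a [0..<p] ! k) {..<p} = a"
      by (auto simp: fun_eq_iff PiE_def extensional_def)
    show "\<forall>a'\<in>?D. map (restrict (\<lambda>k. a' ! k) {..<p}) [0..<p] = a'"
      by (auto intro: nth_equalityI)
    show "(\<lambda>i. map i [0..<p]) ` ?I1 \<subseteq> ?D"
      by (auto simp: distinct_map inj_on_def)
    show "(\<lambda>xs. restrict (\<lambda>a. xs ! a) {..<p}) ` ?D \<subseteq> ?I1"
    proof (intro image_subsetI)
      fix xs assume xs: "xs \<in> ?D"
      have "restrict (\<lambda>a. xs ! a) {..<p} \<in> ?A" by simp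
      moreover have "inj_on (restrict (\<lambda>a. xs ! a) {..<p}) {..<p}"
        using xs by (auto simp: inj_on_def nth_eq_iff_index_eq)
      ultimately show "restrict (\<lambda>a. xs ! a) {..<p} \<in> ?I1" by simp
    qed
  qed
  have "(\<Sum>xs\<in>?D. G xs) = (\<Sum>i\<in>?I1. G (map i [0..<p]))"
    by (rule sum.reindex_bij_betw[OF bij, symmetric])
  also have "\<dots> = (\<Sum>i\<in>?I1. F i)"
    unfolding G_def F_def by (intro sum.cong refl inj_case) auto
  finally show ?thesis using s1 unfolding F_def G_def by simp
qed

lemma core:
  fixes X :: "nat \<Rightarrow> 'n::finite \<Rightarrow> 'n \<Rightarrow> real"
  assumes p: "0 < p"
  shows "(\<Sum>\<sigma>\<in>{\<sigma>. \<sigma> permutes {..<2*p}}. of_int (sign \<sigma>) *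
     (\<Sum>xs\<in>{xs::'n list. distinct xs \<and> length xs = p}. \<Sum>\<pi>\<in>{\<pi>. \<pi> permutes set xs}.
        of_int (sign \<pi>) * (\<Prod>a<p. \<Sum>b\<in>UNIV. X (\<sigma> (2*a)) (xs!a) b * X (\<sigma> (2*a+1)) b (\<pi> (xs!a))))) = 0"
proof -
  let ?P = "{\<sigma>. \<sigma> permutes {..<2*p}}"
  let ?T = "{\<tau>. \<tau> permutes {..<p}}"
  let ?A = "{..<p} \<rightarrow>\<^sub>E (UNIV::'n set)"
  have inner: "(\<Sum>xs\<in>{xs::'n list. distinct xs \<and> length xs = p}. \<Sum>\<pi>\<in>{\<pi>. \<pi> permutes set xs}.
        of_int (sign \<pi>) * (\<Prod>a<p. \<Sum>b\<in>UNIV. X (\<sigma> (2*a)) (xs!a) b * X (\<sigma> (2*a+1)) b (\<pi> (xs!a))))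
      = (\<Sum>\<tau>\<in>?T. of_int (sign \<tau>) * SS X (2*p) \<sigma> (rho_of p \<tau>))" for \<sigma>
  proof -
    have "(\<Sum>xs\<in>{xs::'n list. distinct xs \<and> length xs = p}. \<Sum>\<pi>\<in>{\<pi>. \<pi> permutes set xs}.
        of_int (sign \<pi>) * (\<Prod>a<p. \<Sum>b\<in>UNIV. X (\<sigma> (2*a)) (xs!a) b * X (\<sigma> (2*a+1)) b (\<pi> (xs!a))))
      = (\<Sum>i\<in>?A. \<Sum>\<tau>\<in>?T. of_int (sign \<tau>) * (\<Prod>a<p. \<Sum>b\<in>UNIV. X (\<sigma> (2*a)) (i a) b * X (\<sigma> (2*a+1)) b (i (\<tau> a))))"
      by (rule claimA[where M = "\<lambda>a x y. \<Sum>b\<in>UNIV. X (\<sigma> (2*a)) x b * X (\<sigma> (2*a+1)) b y"])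
    also have "\<dots> = (\<Sum>\<tau>\<in>?T. of_int (sign \<tau>) * (\<Sum>i\<in>?A. \<Prod>a<p. \<Sum>b\<in>UNIV. X (\<sigma> (2*a)) (i a) b * X (\<sigma> (2*a+1)) b (i (\<tau> a))))"
      by (subst sum.swap) (simp add: sum_distrib_left)
    also have "\<dots> = (\<Sum>\<tau>\<in>?T. of_int (sign \<tau>) * SS X (2*p) \<sigma> (rho_of p \<tau>))"
      by (intro sum.cong refl arg_cong2[where f="(*)"] sum_to_SS) auto
    finally show ?thesis .
  qed
  have "(\<Sum>\<sigma>\<in>?P. of_int (sign \<sigma>) * (\<Sum>\<tau>\<in>?T. of_int (sign \<tau>) * SS X (2*p) \<sigma> (rho_of p \<tau>)))
      = (\<Sum>\<tau>\<in>?T. of_int (sign \<tau>) * (\<Sum>\<sigma>\<in>?P. of_int (sign \<sigma>) * SS X (2*p) \<sigma> (rho_of p \<tau>)))"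
    unfolding sum_distrib_left by (subst sum.swap) (simp add: mult.left_commute)
  also have "\<dots> = 0"
  proof (rule sum.neutral, rule ballI)
    fix \<tau> assume t: "\<tau> \<in> ?T"
    note rp = rho_of_perm[of \<tau> p]
    obtain c where c: "c permutes {..<2*p}" "c \<circ> rho_of p \<tau> = rho_of p \<tau> \<circ> c" "sign c = -1"
      using odd_commuting[OF rp(1) rp(2)] t p by auto
    show "of_int (sign \<tau>) * (\<Sum>\<sigma>\<in>?P. of_int (sign \<sigma>) * SS X (2*p) \<sigma> (rho_of p \<tau>)) = 0"
      using H_zero[OF c(1) rp(1) c(2) c(3)] t by simp
  qed
  finally show ?thesis using inner by simp
qed

lemma doubling_step:
  fixes f :: "nat \<Rightarrow> nat \<Rightarrow> nat \<Rightarrow> real"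
  defines "g \<equiv> \<lambda>E a \<sigma>. if a \<in> E then f a (\<sigma> (2*a)) (\<sigma> (2*a+1)) - f a (\<sigma> (2*a+1)) (\<sigma> (2*a)) else f a (\<sigma> (2*a)) (\<sigma> (2*a+1))"
  assumes e: "e < p" "e \<notin> E"
  shows "(\<Sum>\<sigma>\<in>{\<sigma>. \<sigma> permutes {..<2*p}}. of_int (sign \<sigma>) * (\<Prod>a<p. g (insert e E) a \<sigma>))
       = 2 * (\<Sum>\<sigma>\<in>{\<sigma>. \<sigma> permutes {..<2*p}}. of_int (sign \<sigma>) * (\<Prod>a<p. g E a \<sigma>))"
proof -
  let ?P = "{\<sigma>. \<sigma> permutes {..<2*p}}"
  let ?t = "Transposition.transpose (2*e) (2*e+1)"
  have t: "?t permutes {..<2*p}" using e by (intro permutes_swap_id) auto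
  define R where "R \<sigma> = (\<Prod>a\<in>{..<p} - {e}. g E a \<sigma>)" for \<sigma>
  define F where "F \<sigma> = f e (\<sigma> (2*e)) (\<sigma> (2*e+1))" for \<sigma> :: "nat \<Rightarrow> nat"
  define G where "G \<sigma> = f e (\<sigma> (2*e+1)) (\<sigma> (2*e))" for \<sigma> :: "nat \<Rightarrow> nat"
  have p1: "(\<Prod>a<p. g (insert e E) a \<sigma>) = (F \<sigma> - G \<sigma>) * R \<sigma>" for \<sigma>
  proof -
    have "(\<Prod>a<p. g (insert e E) a \<sigma>) = g (insert e E) e \<sigma> * (\<Prod>a\<in>{..<p} - {e}. g (insert e E) a \<sigma>)"
      using e by (intro prod.remove) auto
    also have "(\<Prod>a\<in>{..<p} - {e}. g (insert e E) a \<sigma>) = R \<sigma>"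
      unfolding R_def g_def by (intro prod.cong) auto
    finally show ?thesis by (simp add: g_def F_def G_def)
  qed
  have p2: "(\<Prod>a<p. g E a \<sigma>) = F \<sigma> * R \<sigma>" for \<sigma>
  proof -
    have "(\<Prod>a<p. g E a \<sigma>) = g E e \<sigma> * R \<sigma>"
      unfolding R_def using e by (intro prod.remove) auto
    then show ?thesis using e by (simp add: g_def F_def)
  qed
  have Rt: "R (\<sigma> \<circ> ?t) = R \<sigma>" for \<sigma>
  proof -
    have "g E a (\<sigma> \<circ> ?t) = g E a \<sigma>" if "a \<noteq> e" for a
    proof -
      have "?t (2*a) = 2*a" "?t (2*a+1) = 2*a+1" using that by (auto simp: Transposition.transpose_def)
      then show ?thesis by (simp add: g_def)
    qed
    then show ?thesis unfolding R_def by (intro prod.cong) auto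
  qed
  have Gt: "G (\<sigma> \<circ> ?t) = F \<sigma>" for \<sigma> by (simp add: G_def F_def)
  have sgn: "sign (\<sigma> \<circ> ?t) = - sign \<sigma>" if "\<sigma> \<in> ?P" for \<sigma>
    using that permutation_permutes[of \<sigma>]
    by (auto simp: sign_compose permutation_swap_id sign_swap_id)
  have "(\<Sum>\<sigma>\<in>?P. of_int (sign \<sigma>) * (G \<sigma> * R \<sigma>)) = (\<Sum>\<sigma>\<in>?P. of_int (sign (\<sigma> \<circ> ?t)) * (G (\<sigma> \<circ> ?t) * R (\<sigma> \<circ> ?t)))"
    by (rule sum_permutations_compose_right[OF t])
  also have "\<dots> = (\<Sum>\<sigma>\<in>?P. - (of_int (sign \<sigma>) * (F \<sigma> * R \<sigma>)))"
  proof (rule sum.cong[OF refl])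
    fix \<sigma> assume s: "\<sigma> \<in> ?P"
    show "of_int (sign (\<sigma> \<circ> ?t)) * (G (\<sigma> \<circ> ?t) * R (\<sigma> \<circ> ?t)) = - (of_int (sign \<sigma>) * (F \<sigma> * R \<sigma>))"
      unfolding sgn[OF s] Rt Gt by simp
  qed
  finally have sG: "(\<Sum>\<sigma>\<in>?P. of_int (sign \<sigma>) * (G \<sigma> * R \<sigma>)) = - (\<Sum>\<sigma>\<in>?P. of_int (sign \<sigma>) * (F \<sigma> * R \<sigma>))"
    by (simp add: sum_negf)
  have "(\<Sum>\<sigma>\<in>?P. of_int (sign \<sigma>) * (\<Prod>a<p. g (insert e E) a \<sigma>))
     = (\<Sum>\<sigma>\<in>?P. of_int (sign \<sigma>) * (F \<sigma> * R \<sigma>)) - (\<Sum>\<sigma>\<in>?P. of_int (sign \<sigma>) * (G \<sigma> * R \<sigma>))"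
    by (simp add: p1 sum_subtractf[symmetric] algebra_simps)
  also have "\<dots> = 2 * (\<Sum>\<sigma>\<in>?P. of_int (sign \<sigma>) * (F \<sigma> * R \<sigma>))" using sG by simp
  finally show ?thesis by (simp add: p2)
qed

lemma doubling:
  fixes f :: "nat \<Rightarrow> nat \<Rightarrow> nat \<Rightarrow> real"
  shows "(\<Sum>\<sigma>\<in>{\<sigma>. \<sigma> permutes {..<2*p}}. of_int (sign \<sigma>) *
            (\<Prod>a<p. f a (\<sigma> (2*a)) (\<sigma> (2*a+1)) - f a (\<sigma> (2*a+1)) (\<sigma> (2*a))))
       = 2 ^ p * (\<Sum>\<sigma>\<in>{\<sigma>. \<sigma> permutes {..<2*p}}. of_int (sign \<sigma>) * (\<Prod>a<p. f a (\<sigma> (2*a)) (\<sigma> (2*a+1))))"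
proof -
  define g where "g = (\<lambda>E a \<sigma>. if a \<in> E then f a (\<sigma> (2*a)) (\<sigma> (2*a+1)) - f a (\<sigma> (2*a+1)) (\<sigma> (2*a)) else f a (\<sigma> (2*a)) (\<sigma> (2*a+1)))"
  define T where "T E = (\<Sum>\<sigma>\<in>{\<sigma>. \<sigma> permutes {..<2*p}}. of_int (sign \<sigma>) * (\<Prod>a<p. g E a \<sigma>))" for E
  have main: "E \<subseteq> {..<p} \<Longrightarrow> T E = 2 ^ card E * T {}" for E
  proof (induction E rule: infinite_finite_induct)
    case (infinite A)
    then show ?case using finite_subset by blast
  next
    case empty
    then show ?case by simp
  next
    case (insert e E)
    have "T (insert e E) = 2 * T E"
      unfolding T_def g_def using insert by (intro doubling_step) auto
    then show ?case using insert by simp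
  qed
  have "T {..<p} = 2 ^ p * T {}" using main[of "{..<p}"] by simp
  then show ?thesis by (simp add: T_def g_def)
qed

lemma alg_main:
  fixes \<Omega> :: "'n::finite \<Rightarrow> 'n \<Rightarrow> real^'n \<Rightarrow> real^'n \<Rightarrow> real" and B :: "real^'n \<Rightarrow> 'n \<Rightarrow> 'n \<Rightarrow> real"
  assumes om: "\<And>i j u w. \<Omega> i j u w = c * (\<Sum>b\<in>UNIV. B u i b * B w b j - B w i b * B u b j)"
    and p: "0 < p"
  shows "inv_poly_P p \<Omega> v = 0"
proof -
  let ?P = "{\<sigma>. \<sigma> permutes {..<2*p}}"
  let ?D = "{xs::'n list. distinct xs \<and> length xs = p}"
  define X where "X s = B (v s)" for s
  define W where "W xs \<pi> \<sigma> = (\<Prod>a<p. \<Sum>b\<in>UNIV. X (\<sigma> (2*a)) (xs!a) b * X (\<sigma> (2*a+1)) b (\<pi> (xs!a)))"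
    for xs :: "'n list" and \<pi> :: "'n \<Rightarrow> 'n" and \<sigma> :: "nat \<Rightarrow> nat"
  have wed: "wedge2 (map (\<lambda>i. \<Omega> i (\<pi> i)) xs) v = c ^ p * (\<Sum>\<sigma>\<in>?P. of_int (sign \<sigma>) * W xs \<pi> \<sigma>)"
    if xs: "xs \<in> ?D" for xs \<pi>
  proof -
    define f where "f a x y = (\<Sum>b\<in>UNIV. X x (xs!a) b * X y b (\<pi> (xs!a)))" for a x y
    have len: "length (map (\<lambda>i. \<Omega> i (\<pi> i)) xs) = p" using xs by simp
    have "wedge2 (map (\<lambda>i. \<Omega> i (\<pi> i)) xs) v = (1 / 2 ^ p) * (\<Sum>\<sigma>\<in>?P. of_int (sign \<sigma>) *
        (\<Prod>a<p. c * (f a (\<sigma> (2*a)) (\<sigma> (2*a+1)) - f a (\<sigma> (2*a+1)) (\<sigma> (2*a)))))"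
      unfolding wedge2_def len
      using xs by (intro arg_cong2[where f="(*)"] refl sum.cong prod.cong)
         (auto simp: om f_def X_def sum_subtractf)
    also have "\<dots> = (1 / 2 ^ p) * c ^ p * (\<Sum>\<sigma>\<in>?P. of_int (sign \<sigma>) *
        (\<Prod>a<p. f a (\<sigma> (2*a)) (\<sigma> (2*a+1)) - f a (\<sigma> (2*a+1)) (\<sigma> (2*a))))"
      by (simp add: prod.distrib sum_distrib_left mult_ac)
    also have "\<dots> = c ^ p * (\<Sum>\<sigma>\<in>?P. of_int (sign \<sigma>) * (\<Prod>a<p. f a (\<sigma> (2*a)) (\<sigma> (2*a+1))))"
      by (simp only: doubling) simp
    also have "\<dots> = c ^ p * (\<Sum>\<sigma>\<in>?P. of_int (sign \<sigma>) * W xs \<pi> \<sigma>)"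
      by (simp add: W_def f_def)
    finally show ?thesis .
  qed
  have "inv_poly_P p \<Omega> v = (1 / fact p) * (\<Sum>xs\<in>?D. \<Sum>\<pi>\<in>{\<pi>. \<pi> permutes set xs}.
          of_int (sign \<pi>) * (c ^ p * (\<Sum>\<sigma>\<in>?P. of_int (sign \<sigma>) * W xs \<pi> \<sigma>)))"
    unfolding inv_poly_P_def by (intro arg_cong2[where f="(*)"] refl sum.cong) (simp_all add: wed)
  also have "\<dots> = (1 / fact p) * c ^ p * (\<Sum>xs\<in>?D. \<Sum>\<pi>\<in>{\<pi>. \<pi> permutes set xs}. \<Sum>\<sigma>\<in>?P.
          of_int (sign \<sigma>) * (of_int (sign \<pi>) * W xs \<pi> \<sigma>))"
    by (simp add: sum_distrib_left mult_ac)
  also have "(\<Sum>xs\<in>?D. \<Sum>\<pi>\<in>{\<pi>. \<pi> permutes set xs}. \<Sum>\<sigma>\<in>?P.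
          of_int (sign \<sigma>) * (of_int (sign \<pi>) * W xs \<pi> \<sigma>))
      = (\<Sum>xs\<in>?D. \<Sum>\<sigma>\<in>?P. \<Sum>\<pi>\<in>{\<pi>. \<pi> permutes set xs}.
          of_int (sign \<sigma>) * (of_int (sign \<pi>) * W xs \<pi> \<sigma>))"
    by (intro sum.cong refl sum.swap)
  also have "\<dots> = (\<Sum>\<sigma>\<in>?P. \<Sum>xs\<in>?D. \<Sum>\<pi>\<in>{\<pi>. \<pi> permutes set xs}.
          of_int (sign \<sigma>) * (of_int (sign \<pi>) * W xs \<pi> \<sigma>))"
    by (rule sum.swap)
  also have "\<dots> = (\<Sum>\<sigma>\<in>?P. of_int (sign \<sigma>) * (\<Sum>xs\<in>?D. \<Sum>\<pi>\<in>{\<pi>. \<pi> permutes set xs}.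
          of_int (sign \<pi>) * W xs \<pi> \<sigma>))"
    by (simp add: sum_distrib_left)
  also have "\<dots> = 0"
    unfolding W_def by (rule core[OF p])
  finally show ?thesis by simp
qed

lemma line_deriv:
  fixes f :: "real^'n::finite \<Rightarrow> real"
  assumes "f differentiable (at (y + t *\<^sub>R axis i 1))"
  shows "((\<lambda>s. f (y + s *\<^sub>R axis i 1)) has_real_derivative pd i f (y + t *\<^sub>R axis i 1)) (at t)"
proof -
  let ?e = "axis i (1::real) :: real^'n"
  let ?z = "y + t *\<^sub>R ?e"
  obtain D where D: "(f has_derivative D) (at ?z)" using assms unfolding differentiable_def by blast
  have lin: "linear D" using D has_derivative_linear by blast
  have gen: "((\<lambda>s. f (w + s *\<^sub>R ?e)) has_real_derivative D ?e) (at s0)" if "w + s0 *\<^sub>R ?e = ?z" for w s0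
  proof -
    have inner: "((\<lambda>s. w + s *\<^sub>R ?e) has_derivative (\<lambda>h. h *\<^sub>R ?e)) (at s0)"
      by (auto intro!: derivative_eq_intros)
    have "((\<lambda>s. f (w + s *\<^sub>R ?e)) has_derivative (\<lambda>h. D (h *\<^sub>R ?e))) (at s0)"
      using has_derivative_compose[OF inner] D that by simp
    then show ?thesis
      by (rule has_derivative_imp_has_field_derivative) (simp add: linear_cmul[OF lin])
  qed
  have "pd i f ?z = D ?e"
    unfolding pd_def by (rule DERIV_imp_deriv) (rule gen, simp)
  then show ?thesis using gen[of y t] by simp
qed

lemma pd_eq_local:
  fixes f g :: "real^'n::finite \<Rightarrow> real"
  assumes U: "open U" "x \<in> U" and eq: "\<And>y. y \<in> U \<Longrightarrow> f y = g y"
  shows "pd i f x = pd i g x"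
proof -
  obtain r where r: "r > 0" "ball x r \<subseteq> U" using U open_contains_ball by blast
  have "eventually (\<lambda>t. f (x + t *\<^sub>R axis i 1) = g (x + t *\<^sub>R axis i 1)) (nhds 0)"
    unfolding eventually_nhds_metric
  proof (intro exI conjI allI impI)
    show "r > 0" by fact
    fix t :: real assume "dist t 0 < r"
    then have "x + t *\<^sub>R axis i 1 \<in> ball x r" by (simp add: dist_norm)
    then show "f (x + t *\<^sub>R axis i 1) = g (x + t *\<^sub>R axis i 1)" using r eq by auto
  qed
  then show ?thesis unfolding pd_def by (intro deriv_cong_ev) auto
qed

lemma clairaut_step:
  fixes f :: "real^'n::finite \<Rightarrow> real"
  assumes r: "ball x r \<subseteq> U" and h: "0 < h" "2 * h < r"
    and d0: "\<forall>y\<in>U. f differentiable (at y)"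
    and di: "\<forall>y\<in>U. pd i f differentiable (at y)"
  shows "\<exists>y. dist y x < 2 * h \<and>
     f (x + h *\<^sub>R axis i 1 + h *\<^sub>R axis j 1) - f (x + h *\<^sub>R axis i 1) - f (x + h *\<^sub>R axis j 1) + f x
       = h * h * pd j (pd i f) y"
proof -
  let ?e = "axis i (1::real) :: real^'n"
  let ?d = "axis j (1::real) :: real^'n"
  have inU: "x + a *\<^sub>R ?e + b *\<^sub>R ?d \<in> U" if "0 \<le> a" "a \<le> h" "0 \<le> b" "b \<le> h" for a b
  proof -
    have "norm (a *\<^sub>R ?e + b *\<^sub>R ?d) \<le> norm (a *\<^sub>R ?e) + norm (b *\<^sub>R ?d)" by (rule norm_triangle_ineq)
    also have "\<dots> = a + b" using that by simp
    finally have "dist (x + a *\<^sub>R ?e + b *\<^sub>R ?d) x < r" using that h by (simp add: dist_norm add.assoc)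
    then show ?thesis using r by (auto simp: dist_commute)
  qed
  define \<phi>1 where "\<phi>1 t = f ((x + h *\<^sub>R ?d) + t *\<^sub>R ?e) - f (x + t *\<^sub>R ?e)" for t
  have der1: "(\<phi>1 has_real_derivative (pd i f ((x + h *\<^sub>R ?d) + t *\<^sub>R ?e) - pd i f (x + t *\<^sub>R ?e))) (at t)"
    if "0 \<le> t" "t \<le> h" for t
  proof -
    have a: "(x + h *\<^sub>R ?d) + t *\<^sub>R ?e \<in> U" using inU[of t h] that h by (simp add: ac_simps)
    have b: "x + t *\<^sub>R ?e \<in> U" using inU[of t 0] that h by simp
    show ?thesis unfolding \<phi>1_def
      by (intro DERIV_diff line_deriv) (use a b d0 in auto)
  qed
  obtain \<xi> where \<xi>: "0 < \<xi>" "\<xi> < h" "\<phi>1 h - \<phi>1 0 = (h - 0) * (pd i f ((x + h *\<^sub>R ?d) + \<xi> *\<^sub>R ?e) - pd i f (x + \<xi> *\<^sub>R ?e))"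
    using MVT2[OF h(1), of \<phi>1 "\<lambda>t. pd i f ((x + h *\<^sub>R ?d) + t *\<^sub>R ?e) - pd i f (x + t *\<^sub>R ?e)"] der1 by blast
  define \<phi>2 where "\<phi>2 s = pd i f ((x + \<xi> *\<^sub>R ?e) + s *\<^sub>R ?d)" for s
  have der2: "(\<phi>2 has_real_derivative pd j (pd i f) ((x + \<xi> *\<^sub>R ?e) + s *\<^sub>R ?d)) (at s)"
    if "0 \<le> s" "s \<le> h" for s
  proof -
    have a: "(x + \<xi> *\<^sub>R ?e) + s *\<^sub>R ?d \<in> U" using inU[of \<xi> s] that \<xi> by simp
    show ?thesis unfolding \<phi>2_def by (intro line_deriv) (use a di in auto)
  qed
  obtain \<eta> where \<eta>: "0 < \<eta>" "\<eta> < h" "\<phi>2 h - \<phi>2 0 = (h - 0) * pd j (pd i f) ((x + \<xi> *\<^sub>R ?e) + \<eta> *\<^sub>R ?d)"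
    using MVT2[OF h(1), of \<phi>2 "\<lambda>s. pd j (pd i f) ((x + \<xi> *\<^sub>R ?e) + s *\<^sub>R ?d)"] der2 by blast
  have e1: "\<phi>1 h - \<phi>1 0 = f (x + h *\<^sub>R ?e + h *\<^sub>R ?d) - f (x + h *\<^sub>R ?e) - f (x + h *\<^sub>R ?d) + f x"
    by (simp add: \<phi>1_def ac_simps)
  have e2: "pd i f ((x + h *\<^sub>R ?d) + \<xi> *\<^sub>R ?e) - pd i f (x + \<xi> *\<^sub>R ?e) = \<phi>2 h - \<phi>2 0"
    by (simp add: \<phi>2_def ac_simps)
  let ?y = "(x + \<xi> *\<^sub>R ?e) + \<eta> *\<^sub>R ?d"
  have "dist ?y x = norm (\<xi> *\<^sub>R ?e + \<eta> *\<^sub>R ?d)" by (simp add: dist_norm add.assoc)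
  also have "\<dots> \<le> norm (\<xi> *\<^sub>R ?e) + norm (\<eta> *\<^sub>R ?d)" by (rule norm_triangle_ineq)
  also have "\<dots> < 2 * h" using \<xi> \<eta> by simp
  finally have dy: "dist ?y x < 2 * h" .
  have "f (x + h *\<^sub>R ?e + h *\<^sub>R ?d) - f (x + h *\<^sub>R ?e) - f (x + h *\<^sub>R ?d) + f x = h * h * pd j (pd i f) ?y"
    using \<xi>(3) \<eta>(3) e1 e2 by simp
  then show ?thesis using dy by blast
qed

lemma clairaut:
  fixes f :: "real^'n::finite \<Rightarrow> real"
  assumes U: "open U" "x \<in> U"
    and d0: "\<forall>y\<in>U. f differentiable (at y)"
    and di: "\<forall>y\<in>U. pd i f differentiable (at y)"
    and dj: "\<forall>y\<in>U. pd j f differentiable (at y)"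
    and ci: "isCont (pd j (pd i f)) x" and cj: "isCont (pd i (pd j f)) x"
  shows "pd j (pd i f) x = pd i (pd j f) x"
proof (rule ccontr)
  let ?A = "pd j (pd i f) x" and ?B = "pd i (pd j f) x"
  assume ne: "?A \<noteq> ?B"
  define \<epsilon> where "\<epsilon> = \<bar>?A - ?B\<bar> / 2"
  have \<epsilon>: "\<epsilon> > 0" using ne by (simp add: \<epsilon>_def)
  obtain r where r: "r > 0" "ball x r \<subseteq> U" using U open_contains_ball by blast
  obtain d1 where d1: "d1 > 0" "\<And>y. dist y x < d1 \<Longrightarrow> dist (pd j (pd i f) y) ?A < \<epsilon>"
    using ci \<epsilon> unfolding continuous_at_eps_delta by blast
  obtain d2 where d2: "d2 > 0" "\<And>y. dist y x < d2 \<Longrightarrow> dist (pd i (pd j f) y) ?B < \<epsilon>"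
    using cj \<epsilon> unfolding continuous_at_eps_delta by blast
  define h where "h = min r (min d1 d2) / 4"
  have h: "0 < h" "2 * h < r" "2 * h < d1" "2 * h < d2" using r d1 d2 by (auto simp: h_def)
  obtain y1 where y1: "dist y1 x < 2 * h"
    "f (x + h *\<^sub>R axis i 1 + h *\<^sub>R axis j 1) - f (x + h *\<^sub>R axis i 1) - f (x + h *\<^sub>R axis j 1) + f x
       = h * h * pd j (pd i f) y1"
    using clairaut_step[OF r(2) h(1,2) d0 di] by blast
  obtain y2 where y2: "dist y2 x < 2 * h"
    "f (x + h *\<^sub>R axis j 1 + h *\<^sub>R axis i 1) - f (x + h *\<^sub>R axis j 1) - f (x + h *\<^sub>R axis i 1) + f x
       = h * h * pd i (pd j f) y2"
    using clairaut_step[OF r(2) h(1,2) d0 dj] by blast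
  have "h * h * pd j (pd i f) y1 = h * h * pd i (pd j f) y2"
  proof -
    have c: "x + h *\<^sub>R axis j 1 + h *\<^sub>R axis i 1 = x + h *\<^sub>R axis i 1 + h *\<^sub>R (axis j 1 :: real^'n)"
      by (simp add: algebra_simps)
    show ?thesis using y1(2) y2(2) unfolding c by linarith
  qed
  then have eq: "pd j (pd i f) y1 = pd i (pd j f) y2" using h(1) by simp
  have "dist (pd j (pd i f) y1) ?A < \<epsilon>" using d1(2) y1(1) h by simp
  moreover have "dist (pd i (pd j f) y2) ?B < \<epsilon>" using d2(2) y2(1) h by simp
  ultimately have "\<bar>?A - ?B\<bar> < 2 * \<epsilon>" using eq by (simp add: dist_real_def)
  then show False by (simp add: \<epsilon>_def)
qed

lemma inv_props:
  fixes A :: "real^'n::finite^'n"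
  assumes "invertible A"
  shows "A ** matrix_inv A = mat 1" "matrix_inv A ** A = mat 1"
  using someI_ex[OF assms[unfolded invertible_def]] unfolding matrix_inv_def by auto

lemma inv_entries:
  fixes A :: "real^'n::finite^'n"
  assumes "invertible A"
  shows "(\<Sum>b\<in>UNIV. A $ a $ b * matrix_inv A $ b $ m) = (if a = m then 1 else 0)"
    "(\<Sum>a\<in>UNIV. matrix_inv A $ i $ a * A $ a $ b) = (if i = b then 1 else 0)"
proof -
  have "(A ** matrix_inv A) $ a $ m = mat 1 $ a $ m" using inv_props(1)[OF assms] by simp
  then show "(\<Sum>b\<in>UNIV. A $ a $ b * matrix_inv A $ b $ m) = (if a = m then 1 else 0)"
    by (simp add: matrix_matrix_mult_def mat_def)
  have "(matrix_inv A ** A) $ i $ b = mat 1 $ i $ b" using inv_props(2)[OF assms] by simp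
  then show "(\<Sum>a\<in>UNIV. matrix_inv A $ i $ a * A $ a $ b) = (if i = b then 1 else 0)"
    by (simp add: matrix_matrix_mult_def mat_def)
qed

lemma inv_cramer:
  fixes A :: "real^'n::finite^'n"
  assumes "invertible A"
  shows "matrix_inv A $ k $ m = det (\<chi> a b. if b = k then axis m 1 $ a else A $ a $ b) / det A"
proof -
  have d: "det A \<noteq> 0" using assms invertible_det_nz by blast
  have "A *v (\<chi> k. matrix_inv A $ k $ m) = axis m 1"
    using inv_entries(1)[OF assms] by (simp add: matrix_vector_mult_def vec_eq_iff axis_def)
  then have "(\<chi> k. matrix_inv A $ k $ m) = (\<chi> k. det (\<chi> a b. if b = k then axis m (1::real) $ a else A $ a $ b) / det A)"
    using cramer[OF d] by blast
  then have "(\<chi> k. matrix_inv A $ k $ m) $ k = (\<chi> k. det (\<chi> a b. if b = k then axis m (1::real) $ a else A $ a $ b) / det A) $ k"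
    by (rule arg_cong)
  then show ?thesis by simp
qed

lemma det_tendsto:
  fixes F :: "'b \<Rightarrow> real^'n::finite^'n"
  assumes "\<And>a b. ((\<lambda>t. F t $ a $ b) \<longlongrightarrow> F0 $ a $ b) net"
  shows "((\<lambda>t. det (F t)) \<longlongrightarrow> det F0) net"
  unfolding det_def by (intro tendsto_sum tendsto_mult tendsto_const tendsto_prod assms)

lemma inv_deriv:
  fixes N :: "real \<Rightarrow> real^'n::finite^'n"
  assumes inv: "eventually (\<lambda>t. invertible (N t)) (nhds 0)"
    and der: "\<And>a b. ((\<lambda>t. N t $ a $ b) has_real_derivative N' a b) (at 0)"
  shows "((\<lambda>t. matrix_inv (N t) $ i $ m) has_real_derivative
          (- (\<Sum>a\<in>UNIV. \<Sum>b\<in>UNIV. matrix_inv (N 0) $ i $ a * N' a b * matrix_inv (N 0) $ b $ m))) (at 0)"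
proof -
  define H where "H t = matrix_inv (N t)" for t
  have inv0: "invertible (N 0)" using inv by (auto simp: eventually_nhds)
  have invat: "eventually (\<lambda>t. invertible (N t)) (at 0)" unfolding eventually_at_filter by (rule eventually_mono[OF inv]) simp
  have contN: "((\<lambda>t. N t $ a $ b) \<longlongrightarrow> N 0 $ a $ b) (at 0)" for a b
    using DERIV_isCont[OF der[of a b]] by (simp add: isCont_def)
  have contH: "((\<lambda>t. H t $ k $ m') \<longlongrightarrow> H 0 $ k $ m') (at 0)" for k m'
  proof -
    let ?C = "\<lambda>A::real^'n^'n. (\<chi> a b. if b = k then axis m' 1 $ a else A $ a $ b) :: real^'n^'n"
    have "((\<lambda>t. det (?C (N t)) / det (N t)) \<longlongrightarrow> det (?C (N 0)) / det (N 0)) (at 0)"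
      using inv0 invertible_det_nz by (intro tendsto_divide det_tendsto) (auto intro: contN)
    then have "((\<lambda>t. det (?C (N t)) / det (N t)) \<longlongrightarrow> H 0 $ k $ m') (at 0)"
      using inv_cramer[OF inv0] by (simp add: H_def)
    moreover have "eventually (\<lambda>t. det (?C (N t)) / det (N t) = H t $ k $ m') (at 0)"
      using invat by eventually_elim (simp add: H_def inv_cramer)
    ultimately show ?thesis by (rule Lim_transform_eventually)
  qed
  have quot: "((\<lambda>t. (N t $ a $ b - N 0 $ a $ b) / t) \<longlongrightarrow> N' a b) (at 0)" for a b
    using der[of a b] unfolding has_field_derivative_iff by simp
  have ident: "H t $ i $ m - H 0 $ i $ m = (\<Sum>a\<in>UNIV. \<Sum>b\<in>UNIV. H t $ i $ a * (N 0 $ a $ b - N t $ a $ b) * H 0 $ b $ m)"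
    if it: "invertible (N t)" for t
  proof -
    have "(\<Sum>a\<in>UNIV. \<Sum>b\<in>UNIV. H t $ i $ a * (N 0 $ a $ b - N t $ a $ b) * H 0 $ b $ m)
       = (\<Sum>a\<in>UNIV. H t $ i $ a * (\<Sum>b\<in>UNIV. N 0 $ a $ b * H 0 $ b $ m))
         - (\<Sum>b\<in>UNIV. (\<Sum>a\<in>UNIV. H t $ i $ a * N t $ a $ b) * H 0 $ b $ m)"
    proof -
      have "(\<Sum>a\<in>UNIV. \<Sum>b\<in>UNIV. H t $ i $ a * (N 0 $ a $ b - N t $ a $ b) * H 0 $ b $ m)
          = (\<Sum>a\<in>UNIV. \<Sum>b\<in>UNIV. H t $ i $ a * (N 0 $ a $ b * H 0 $ b $ m))
          - (\<Sum>a\<in>UNIV. \<Sum>b\<in>UNIV. H t $ i $ a * N t $ a $ b * H 0 $ b $ m)"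
        unfolding sum_subtractf[symmetric] by (intro sum.cong refl) (simp add: algebra_simps)
      also have "(\<Sum>a\<in>UNIV. \<Sum>b\<in>UNIV. H t $ i $ a * (N 0 $ a $ b * H 0 $ b $ m))
          = (\<Sum>a\<in>UNIV. H t $ i $ a * (\<Sum>b\<in>UNIV. N 0 $ a $ b * H 0 $ b $ m))"
        by (simp add: sum_distrib_left)
      also have "(\<Sum>a\<in>UNIV. \<Sum>b\<in>UNIV. H t $ i $ a * N t $ a $ b * H 0 $ b $ m)
          = (\<Sum>b\<in>UNIV. \<Sum>a\<in>UNIV. H t $ i $ a * N t $ a $ b * H 0 $ b $ m)"
        by (rule sum.swap)
      also have "\<dots> = (\<Sum>b\<in>UNIV. (\<Sum>a\<in>UNIV. H t $ i $ a * N t $ a $ b) * H 0 $ b $ m)"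
        by (simp add: sum_distrib_right)
      finally show ?thesis .
    qed
    also have "\<dots> = (\<Sum>a\<in>UNIV. H t $ i $ a * (if a = m then 1 else 0)) - (\<Sum>b\<in>UNIV. (if i = b then 1 else 0) * H 0 $ b $ m)"
      using inv_entries[OF inv0] inv_entries[OF it] by (simp add: H_def)
    also have "\<dots> = H t $ i $ m - H 0 $ i $ m"
      by (simp add: if_distrib[of "\<lambda>x. _ * x"] if_distrib[of "\<lambda>x. x * _"] cong: if_cong)
    finally show ?thesis by simp
  qed
  have "((\<lambda>t. (\<Sum>a\<in>UNIV. \<Sum>b\<in>UNIV. H t $ i $ a * (- ((N t $ a $ b - N 0 $ a $ b) / t)) * H 0 $ b $ m))
        \<longlongrightarrow> (\<Sum>a\<in>UNIV. \<Sum>b\<in>UNIV. H 0 $ i $ a * (- N' a b) * H 0 $ b $ m)) (at 0)"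
    by (intro tendsto_intros contH quot)
  moreover have "eventually (\<lambda>t. (\<Sum>a\<in>UNIV. \<Sum>b\<in>UNIV. H t $ i $ a * (- ((N t $ a $ b - N 0 $ a $ b) / t)) * H 0 $ b $ m)
      = (H t $ i $ m - H 0 $ i $ m) / (t - 0)) (at 0)"
    using invat
  proof eventually_elim
    case (elim t)
    have "(H t $ i $ m - H 0 $ i $ m) / (t - 0) = (\<Sum>a\<in>UNIV. \<Sum>b\<in>UNIV. H t $ i $ a * (N 0 $ a $ b - N t $ a $ b) * H 0 $ b $ m) / t"
      using ident[OF elim] by simp
    also have "\<dots> = (\<Sum>a\<in>UNIV. \<Sum>b\<in>UNIV. H t $ i $ a * (- ((N t $ a $ b - N 0 $ a $ b) / t)) * H 0 $ b $ m)"
      unfolding sum_divide_distrib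
    proof (intro sum.cong refl)
      fix a b
      show "H t $ i $ a * (N 0 $ a $ b - N t $ a $ b) * H 0 $ b $ m / t =
          H t $ i $ a * - ((N t $ a $ b - N 0 $ a $ b) / t) * H 0 $ b $ m"
        by (cases "t = 0") (simp_all add: field_simps)
    qed
    finally show ?case by simp
  qed
  ultimately have "((\<lambda>t. (H t $ i $ m - H 0 $ i $ m) / (t - 0)) \<longlongrightarrow> (\<Sum>a\<in>UNIV. \<Sum>b\<in>UNIV. H 0 $ i $ a * (- N' a b) * H 0 $ b $ m)) (at 0)"
    by (rule Lim_transform_eventually)
  then have "((\<lambda>t. H t $ i $ m) has_real_derivative (\<Sum>a\<in>UNIV. \<Sum>b\<in>UNIV. H 0 $ i $ a * (- N' a b) * H 0 $ b $ m)) (at 0)"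
    unfolding has_field_derivative_iff .
  moreover have "(\<Sum>a\<in>UNIV. \<Sum>b\<in>UNIV. H 0 $ i $ a * (- N' a b) * H 0 $ b $ m)
     = - (\<Sum>a\<in>UNIV. \<Sum>b\<in>UNIV. H 0 $ i $ a * N' a b * H 0 $ b $ m)"
    by (simp add: sum_negf)
  ultimately show ?thesis by (simp add: H_def)
qed

lemma posdef_invertible:
  fixes M :: "real^'n::finite^'n"
  assumes "\<forall>v. v \<noteq> 0 \<longrightarrow> (\<Sum>i\<in>UNIV. \<Sum>j\<in>UNIV. M $ i $ j * v$i * v$j) > 0"
  shows "invertible M"
proof -
  have "\<forall>v. M *v v = 0 \<longrightarrow> v = 0"
  proof (intro allI impI)
    fix v assume Mv: "M *v v = 0"
    have "(\<Sum>i\<in>UNIV. \<Sum>j\<in>UNIV. M $ i $ j * v$i * v$j) = (\<Sum>i\<in>UNIV. v$i * (M *v v)$i)"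
      by (simp add: matrix_vector_mult_def sum_distrib_left mult_ac)
    also have "\<dots> = 0" using Mv by simp
    finally show "v = 0" using assms by force
  qed
  then obtain B where B: "B ** M = mat 1" using matrix_left_invertible_ker by blast
  then have "M ** B = mat 1" using matrix_left_right_inverse by blast
  with B show ?thesis unfolding invertible_def by blast
qed

lemma sum3_rot:
  "(\<Sum>m\<in>A. \<Sum>a\<in>B. \<Sum>b\<in>C. F m a b) = (\<Sum>b\<in>C. \<Sum>a\<in>B. \<Sum>m\<in>A. F m a b)"
proof -
  have "(\<Sum>m\<in>A. \<Sum>a\<in>B. \<Sum>b\<in>C. F m a b) = (\<Sum>a\<in>B. \<Sum>m\<in>A. \<Sum>b\<in>C. F m a b)"
    by (rule sum.swap)
  also have "\<dots> = (\<Sum>a\<in>B. \<Sum>b\<in>C. \<Sum>m\<in>A. F m a b)"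
    by (intro sum.cong refl sum.swap)
  also have "\<dots> = (\<Sum>b\<in>C. \<Sum>a\<in>B. \<Sum>m\<in>A. F m a b)"
    by (rule sum.swap)
  finally show ?thesis .
qed

locale hess =
  fixes U :: "(real^'n::finite) set" and \<phi> :: "real^'n \<Rightarrow> real"
  assumes U: "open U" and sm: "smooth_on U \<phi>" and pdm: "pos_def_metric_on U (hessian \<phi>)"
begin

lemma sm_diff: "y \<in> U \<Longrightarrow> pds xs \<phi> differentiable (at y)"
  using sm U unfolding smooth_on_def by (simp add: differentiable_on_eq_differentiable_at)

lemma sm_cont: "y \<in> U \<Longrightarrow> isCont (pds xs \<phi>) y"
  using sm_diff differentiable_imp_continuous_within by blast

lemma sm_clairaut:
  assumes "y \<in> U"
  shows "pd j (pd i (pds xs \<phi>)) y = pd i (pd j (pds xs \<phi>)) y"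
proof (rule clairaut[OF U assms])
  show "\<forall>y\<in>U. pds xs \<phi> differentiable (at y)" using sm_diff by blast
  show "\<forall>y\<in>U. pd i (pds xs \<phi>) differentiable (at y)" using sm_diff[of _ "i # xs"] by simp
  show "\<forall>y\<in>U. pd j (pds xs \<phi>) differentiable (at y)" using sm_diff[of _ "j # xs"] by simp
  show "isCont (pd j (pd i (pds xs \<phi>))) y" using sm_cont[OF assms, of "j # i # xs"] by simp
  show "isCont (pd i (pd j (pds xs \<phi>))) y" using sm_cont[OF assms, of "i # j # xs"] by simp
qed

definition TT :: "'n \<Rightarrow> 'n \<Rightarrow> 'n \<Rightarrow> real^'n \<Rightarrow> real" where
  "TT a b c = pd a (hessian \<phi> b c)"

lemma hess_pds: "hessian \<phi> b c = pds [b, c] \<phi>"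
  by (simp add: hessian_def fun_eq_iff)

lemma TT_pds: "TT a b c = pds [a, b, c] \<phi>"
  by (simp add: TT_def hessian_def fun_eq_iff)

lemma hess_sym: "y \<in> U \<Longrightarrow> hessian \<phi> b c y = hessian \<phi> c b y"
  using pdm unfolding pos_def_metric_on_def by blast

lemma TT_sym1: "y \<in> U \<Longrightarrow> TT a b c y = TT b a c y"
  using sm_clairaut[of y b a "[c]"] by (simp add: TT_def hessian_def)

lemma TT_sym2: "y \<in> U \<Longrightarrow> TT a b c y = TT a c b y"
  unfolding TT_def by (rule pd_eq_local[OF U]) (auto intro: hess_sym)

lemma christoffel_simp:
  assumes "y \<in> U"
  shows "christoffel (hessian \<phi>) k i j y = (1/2) * (\<Sum>l\<in>UNIV. metric_inv (hessian \<phi>) y k l * TT i j l y)"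
proof -
  have "pd i (hessian \<phi> j l) y + pd j (hessian \<phi> i l) y - pd l (hessian \<phi> i j) y = TT i j l y" for l
  proof -
    have "pd j (hessian \<phi> i l) y = TT i j l y" using TT_sym1[OF assms, of j i l] by (simp add: TT_def)
    moreover have "pd l (hessian \<phi> i j) y = TT i j l y"
      using TT_sym1[OF assms, of l i j] TT_sym2[OF assms, of i l j] by (simp add: TT_def)
    ultimately show ?thesis by (simp add: TT_def)
  qed
  then show ?thesis by (simp add: christoffel_def)
qed

lemma invertible_at: "y \<in> U \<Longrightarrow> invertible (\<chi> a b. hessian \<phi> a b y)"
  using pdm unfolding pos_def_metric_on_def by (intro posdef_invertible) auto

lemma ginv_deriv:
  assumes x: "x \<in> U"
  shows "((\<lambda>t. metric_inv (hessian \<phi>) (x + t *\<^sub>R axis k 1) i m) has_real_derivative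
      (- (\<Sum>a\<in>UNIV. \<Sum>b\<in>UNIV. metric_inv (hessian \<phi>) x i a * TT k a b x * metric_inv (hessian \<phi>) x b m))) (at 0)"
proof -
  define N where "N t = (\<chi> a b. hessian \<phi> a b (x + t *\<^sub>R axis k 1))" for t
  obtain r where r: "r > 0" "ball x r \<subseteq> U" using U x open_contains_ball by blast
  have ev: "eventually (\<lambda>t. invertible (N t)) (nhds 0)"
    unfolding eventually_nhds_metric
  proof (intro exI conjI allI impI)
    show "r > 0" by fact
    fix t :: real assume "dist t 0 < r"
    then have "x + t *\<^sub>R axis k 1 \<in> U" using r by (auto simp: dist_norm)
    then show "invertible (N t)" unfolding N_def by (rule invertible_at)
  qed
  have der: "((\<lambda>t. N t $ a $ b) has_real_derivative TT k a b x) (at 0)" for a b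
  proof -
    have "hessian \<phi> a b differentiable (at (x + 0 *\<^sub>R axis k 1))" using sm_diff[OF x, of "[a, b]"] by (simp add: hessian_def)
    from line_deriv[OF this] show ?thesis by (simp add: N_def TT_def)
  qed
  have "metric_inv (hessian \<phi>) y i m = matrix_inv (\<chi> a b. hessian \<phi> a b y) $ i $ m" for y i m
    by (simp add: metric_inv_def)
  then show ?thesis using inv_deriv[OF ev der, of i m] by (simp add: N_def)
qed

end

context hess begin

abbreviation "G \<equiv> metric_inv (hessian \<phi>)"

lemma TT_rev: "y \<in> U \<Longrightarrow> TT a b c y = TT c b a y"
  using TT_sym1 TT_sym2 by metis

lemma chr_deriv:
  assumes x: "x \<in> U"
  shows "pd k (christoffel (hessian \<phi>) i l j) x = (1/2) * (\<Sum>m\<in>UNIV.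
      (- (\<Sum>a\<in>UNIV. \<Sum>b\<in>UNIV. G x i a * TT k a b x * G x b m)) * TT l j m x + G x i m * pd k (TT l j m) x)"
proof -
  have e1: "pd k (christoffel (hessian \<phi>) i l j) x = pd k (\<lambda>y. (1/2) * (\<Sum>m\<in>UNIV. G y i m * TT l j m y)) x"
    by (rule pd_eq_local[OF U x]) (rule christoffel_simp)
  have dT: "((\<lambda>t. TT l j m (x + t *\<^sub>R axis k 1)) has_real_derivative pd k (TT l j m) x) (at 0)" for m
  proof -
    have "TT l j m differentiable (at (x + 0 *\<^sub>R axis k 1))" using sm_diff[OF x, of "[l, j, m]"] by (simp add: TT_pds)
    from line_deriv[OF this] show ?thesis by simp
  qed
  have dm: "((\<lambda>t. G (x + t *\<^sub>R axis k 1) i m * TT l j m (x + t *\<^sub>R axis k 1)) has_real_derivative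
     (- (\<Sum>a\<in>UNIV. \<Sum>b\<in>UNIV. G x i a * TT k a b x * G x b m)) * TT l j m x + G x i m * pd k (TT l j m) x) (at 0)" for m
    using DERIV_mult[OF ginv_deriv[OF x, of k i m] dT[of m]] by (simp add: mult.commute)
  have der: "((\<lambda>t. (1/2) * (\<Sum>m\<in>UNIV. G (x + t *\<^sub>R axis k 1) i m * TT l j m (x + t *\<^sub>R axis k 1))) has_real_derivative
      (1/2) * (\<Sum>m\<in>UNIV. (- (\<Sum>a\<in>UNIV. \<Sum>b\<in>UNIV. G x i a * TT k a b x * G x b m)) * TT l j m x + G x i m * pd k (TT l j m) x)) (at 0)"
    by (intro DERIV_cmult DERIV_sum dm)
  have e2: "pd k (\<lambda>y. (1/2) * (\<Sum>m\<in>UNIV. G y i m * TT l j m y)) x = (1/2) * (\<Sum>m\<in>UNIV.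
      (- (\<Sum>a\<in>UNIV. \<Sum>b\<in>UNIV. G x i a * TT k a b x * G x b m)) * TT l j m x + G x i m * pd k (TT l j m) x)"
    unfolding pd_def[of k "\<lambda>y. (1/2) * (\<Sum>m\<in>UNIV. G y i m * TT l j m y)" x] using DERIV_imp_deriv[OF der] by simp
  show ?thesis using e1 e2 by simp
qed

end

context hess begin

definition AA :: "real^'n \<Rightarrow> 'n \<Rightarrow> 'n \<Rightarrow> 'n \<Rightarrow> real" where
  "AA x k i b = (\<Sum>a\<in>UNIV. G x i a * TT a b k x)"

lemma C1:
  assumes x: "x \<in> U"
  shows "(\<Sum>m\<in>UNIV. (- (\<Sum>a\<in>UNIV. \<Sum>b\<in>UNIV. G x i a * TT k a b x * G x b m)) * TT l j m x)
       = - (\<Sum>b\<in>UNIV. AA x k i b * AA x l b j)"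
proof -
  have "(\<Sum>m\<in>UNIV. (- (\<Sum>a\<in>UNIV. \<Sum>b\<in>UNIV. G x i a * TT k a b x * G x b m)) * TT l j m x)
      = - (\<Sum>m\<in>UNIV. \<Sum>a\<in>UNIV. \<Sum>b\<in>UNIV. G x i a * TT k a b x * G x b m * TT l j m x)"
    by (simp add: sum_distrib_right sum_negf)
  also have "(\<Sum>m\<in>UNIV. \<Sum>a\<in>UNIV. \<Sum>b\<in>UNIV. G x i a * TT k a b x * G x b m * TT l j m x)
      = (\<Sum>b\<in>UNIV. \<Sum>a\<in>UNIV. \<Sum>m\<in>UNIV. G x i a * TT k a b x * G x b m * TT l j m x)"
    by (rule sum3_rot)
  also have "\<dots> = (\<Sum>b\<in>UNIV. \<Sum>a\<in>UNIV. \<Sum>m\<in>UNIV. (G x i a * TT a b k x) * (G x b m * TT m j l x))"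
  proof (intro sum.cong refl)
    fix a b m
    have "TT k a b x = TT a b k x" using TT_sym1[OF x, of k a b] TT_sym2[OF x, of a k b] by simp
    moreover have "TT l j m x = TT m j l x" using TT_rev[OF x] by blast
    ultimately show "G x i a * TT k a b x * G x b m * TT l j m x = (G x i a * TT a b k x) * (G x b m * TT m j l x)"
      by (simp add: ac_simps)
  qed
  also have "\<dots> = (\<Sum>b\<in>UNIV. AA x k i b * AA x l b j)"
    unfolding AA_def by (simp add: sum_product)
  finally show ?thesis .
qed

lemma C2:
  assumes x: "x \<in> U"
  shows "(\<Sum>m\<in>UNIV. christoffel (hessian \<phi>) i k m x * christoffel (hessian \<phi>) m l j x)
       = (1/4) * (\<Sum>b\<in>UNIV. AA x k i b * AA x l b j)"
proof -
  have a1: "christoffel (hessian \<phi>) i k m x = (1/2) * AA x k i m" for m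
  proof -
    have "christoffel (hessian \<phi>) i k m x = (1/2) * (\<Sum>a\<in>UNIV. G x i a * TT k m a x)"
      using christoffel_simp[OF x] by simp
    also have "\<dots> = (1/2) * AA x k i m"
      unfolding AA_def using TT_rev[OF x] by (intro arg_cong2[where f="(*)"] refl sum.cong) auto
    finally show ?thesis .
  qed
  have a2: "christoffel (hessian \<phi>) m l j x = (1/2) * AA x l m j" for m
  proof -
    have "christoffel (hessian \<phi>) m l j x = (1/2) * (\<Sum>a\<in>UNIV. G x m a * TT l j a x)"
      using christoffel_simp[OF x] by simp
    also have "\<dots> = (1/2) * AA x l m j"
      unfolding AA_def using TT_rev[OF x] by (intro arg_cong2[where f="(*)"] refl sum.cong) auto
    finally show ?thesis .
  qed
  show ?thesis by (simp add: a1 a2 sum_distrib_left)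
qed

lemma C3:
  assumes x: "x \<in> U"
  shows "pd k (TT l j m) x = pd l (TT k j m) x"
  using sm_clairaut[OF x, of l k "[j, m]"] by (simp add: TT_def hessian_def)

lemma curv_formula:
  assumes x: "x \<in> U"
  shows "curv (hessian \<phi>) i j k l x = - (1/4) * (\<Sum>b\<in>UNIV. AA x k i b * AA x l b j - AA x l i b * AA x k b j)"
proof -
  let ?P = "\<lambda>k l. (\<Sum>b\<in>UNIV. AA x k i b * AA x l b j)"
  let ?Q = "\<lambda>k l. (\<Sum>m\<in>UNIV. G x i m * pd k (TT l j m) x)"
  have d1: "pd k (christoffel (hessian \<phi>) i l j) x = (1/2) * (- ?P k l + ?Q k l)"
    unfolding chr_deriv[OF x] sum.distrib C1[OF x] by simp
  have d2: "pd l (christoffel (hessian \<phi>) i k j) x = (1/2) * (- ?P l k + ?Q l k)"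
    unfolding chr_deriv[OF x] sum.distrib C1[OF x] by simp
  have q: "?Q k l = ?Q l k" using C3[OF x] by simp
  have s: "(\<Sum>m\<in>UNIV. christoffel (hessian \<phi>) i k m x * christoffel (hessian \<phi>) m l j x
              - christoffel (hessian \<phi>) i l m x * christoffel (hessian \<phi>) m k j x)
         = (1/4) * ?P k l - (1/4) * ?P l k"
    unfolding sum_subtractf C2[OF x] ..
  have "curv (hessian \<phi>) i j k l x = (1/2) * (- ?P k l + ?Q k l) - (1/2) * (- ?P l k + ?Q l k) + ((1/4) * ?P k l - (1/4) * ?P l k)"
    unfolding curv_def d1 d2 s ..
  also have "\<dots> = - (1/4) * (?P k l - ?P l k)" using q by (simp add: algebra_simps)
  also have "\<dots> = - (1/4) * (\<Sum>b\<in>UNIV. AA x k i b * AA x l b j - AA x l i b * AA x k b j)"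
    by (simp add: sum_subtractf)
  finally show ?thesis .
qed

end

context hess begin

definition BB :: "real^'n \<Rightarrow> real^'n \<Rightarrow> 'n \<Rightarrow> 'n \<Rightarrow> real" where
  "BB x u i b = (\<Sum>k\<in>UNIV. u$k * AA x k i b)"

lemma curv_form_formula:
  assumes x: "x \<in> U"
  shows "curv_form (hessian \<phi>) x i j u w = - (1/4) * (\<Sum>b\<in>UNIV. BB x u i b * BB x w b j - BB x w i b * BB x u b j)"
proof -
  define F where "F b k l = u$k * w$l * (AA x k i b * AA x l b j - AA x l i b * AA x k b j)" for b k l
  have "curv_form (hessian \<phi>) x i j u w = (\<Sum>k\<in>UNIV. \<Sum>l\<in>UNIV. - (1/4) * (\<Sum>b\<in>UNIV. F b k l))"
    unfolding curv_form_def curv_formula[OF x] F_def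
    by (intro sum.cong refl) (simp add: sum_distrib_left sum_distrib_right ac_simps)
  also have "\<dots> = - (1/4) * (\<Sum>k\<in>UNIV. \<Sum>l\<in>UNIV. \<Sum>b\<in>UNIV. F b k l)"
    by (simp add: sum_distrib_left)
  also have "(\<Sum>k\<in>UNIV. \<Sum>l\<in>UNIV. \<Sum>b\<in>UNIV. F b k l) = (\<Sum>b\<in>UNIV. \<Sum>k\<in>UNIV. \<Sum>l\<in>UNIV. F b k l)"
  proof -
    have "(\<Sum>k\<in>UNIV. \<Sum>l\<in>UNIV. \<Sum>b\<in>UNIV. F b k l) = (\<Sum>k\<in>UNIV. \<Sum>b\<in>UNIV. \<Sum>l\<in>UNIV. F b k l)"
      by (intro sum.cong refl sum.swap)
    also have "\<dots> = (\<Sum>b\<in>UNIV. \<Sum>k\<in>UNIV. \<Sum>l\<in>UNIV. F b k l)" by (rule sum.swap)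
    finally show ?thesis .
  qed
  also have "(\<Sum>b\<in>UNIV. \<Sum>k\<in>UNIV. \<Sum>l\<in>UNIV. F b k l) = (\<Sum>b\<in>UNIV. BB x u i b * BB x w b j - BB x w i b * BB x u b j)"
  proof (rule sum.cong[OF refl])
    fix b
    have e1: "BB x u i b * BB x w b j = (\<Sum>k\<in>UNIV. \<Sum>l\<in>UNIV. u$k * w$l * (AA x k i b * AA x l b j))"
      unfolding BB_def sum_product by (intro sum.cong refl) (simp add: ac_simps)
    have "BB x w i b * BB x u b j = (\<Sum>l\<in>UNIV. \<Sum>k\<in>UNIV. u$k * w$l * (AA x l i b * AA x k b j))"
      unfolding BB_def sum_product by (intro sum.cong refl) (simp add: ac_simps)
    also have "\<dots> = (\<Sum>k\<in>UNIV. \<Sum>l\<in>UNIV. u$k * w$l * (AA x l i b * AA x k b j))" by (rule sum.swap)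
    finally have e2: "BB x w i b * BB x u b j = (\<Sum>k\<in>UNIV. \<Sum>l\<in>UNIV. u$k * w$l * (AA x l i b * AA x k b j))" .
    show "(\<Sum>k\<in>UNIV. \<Sum>l\<in>UNIV. F b k l) = BB x u i b * BB x w b j - BB x w i b * BB x u b j"
      unfolding e1 e2 F_def sum_subtractf[symmetric] by (simp add: algebra_simps)
  qed
  finally show ?thesis .
qed

end

theorem mainTheorem4:
  fixes U :: "(real^'n::finite) set" and \<phi> :: "real^'n \<Rightarrow> real"
  assumes "open U"
    and "smooth_on U \<phi>"
    and "pos_def_metric_on U (hessian \<phi>)"
  shows "\<forall>k\<ge>1. \<forall>x\<in>U. \<forall>v. pontryagin_form (hessian \<phi>) k x v = 0"
proof (intro allI impI ballI)
  fix k :: nat and x v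
  assume k: "k \<ge> 1" and x: "x \<in> U"
  interpret hess U \<phi> by unfold_locales (rule assms)+
  show "pontryagin_form (hessian \<phi>) k x v = 0"
    unfolding pontryagin_form_def
    by (rule alg_main[where c = "- (1/4)" and B = "\<lambda>u i b. BB x u i b"]) (use curv_form_formula[OF x] k in auto)
qed

end
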